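(* Consider an unweighted ESP instance on $G=(V,E)$, $|V|=n$, root $r$, and let $L^*$ be the minimum total latency of a feasible expanding search pattern. For each $k\in\{1,\dots,n\}$ let $T_k$ be the tree returned by Garg's 2-approximation algorithm for the rooted $k$-MST problem (a subtree of $G$ containing $r$ with exactly $k$ vertices whose length $\ell(T_k)=\sum_{e\in E(T_k)}\ell_e$ is at most twice the minimum length of such a tree), where $T_1=(\{r\},\emptyset)$. Let $H$ be the directed graph with vertex set $\{1,\dots,n\}$, arcs $(i,j)$ for all $i<j$, and arc costs $c_{i,j}=(n-i)\,\ell(T_j)$. Then a shortest $(1,n)$-path in $H$ has cost at most $2eL^*$.
   Context: Unweighted ESP: connected undirected graph $G=(V,E)$, root $r\in V$, edge lengths $\ell_e\in\mathbb{Z}_{>0}$, all vertex weights $w_v=1$. An expanding search pattern is a sequence of edges $\sigma=(e_1,\dots,e_m)$ with $r\in e_1$ such that $\{e_1,\dots,e_i\}$ forms a tree in $G$ for every $i$; it is feasible if it visits every vertex. For $v\ne r$, $k_v=\min\{i:v\in e_i\}$, $k_r=0$, latency $L_v(\sigma)=\sum_{i=1}^{k_v}\ell_{e_i}$; total latency $L(\sigma)=\sum_{v\in V}L_v(\sigma)$. The cost of a path in $H$ is the sum of its arc costs. *)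

theory Defs
  imports Complex_Main
begin

definition simple_graph :: "'a set \<Rightarrow> 'a set set \<Rightarrow> bool" where
  "simple_graph V E \<longleftrightarrow> finite V \<and> (\<forall>e\<in>E. e \<subseteq> V \<and> card e = 2)"

definition adj :: "'a set set \<Rightarrow> 'a \<Rightarrow> 'a \<Rightarrow> bool" where
  "adj F u v \<longleftrightarrow> {u, v} \<in> F"

definition connected_on :: "'a set \<Rightarrow> 'a set set \<Rightarrow> bool" where
  "connected_on W F \<longleftrightarrow> (\<forall>u\<in>W. \<forall>v\<in>W. (adj F)\<^sup>*\<^sup>* u v)"

definition is_tree :: "'a set \<Rightarrow> 'a set set \<Rightarrow> bool" where
  "is_tree W F \<longleftrightarrow> finite W \<and> W \<noteq> {} \<and> (\<forall>e\<in>F. e \<subseteq> W \<and> card e = 2)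
      \<and> connected_on W F \<and> card W = card F + 1"

definition edges_form_tree :: "'a set set \<Rightarrow> bool" where
  "edges_form_tree F \<longleftrightarrow> finite F \<and> is_tree (\<Union>F) F"

definition rooted_subtree :: "'a set \<Rightarrow> 'a set set \<Rightarrow> 'a \<Rightarrow> 'a set \<Rightarrow> 'a set set \<Rightarrow> bool" where
  "rooted_subtree V E r W F \<longleftrightarrow> W \<subseteq> V \<and> F \<subseteq> E \<and> r \<in> W \<and> is_tree W F"

definition tree_length :: "('a set \<Rightarrow> nat) \<Rightarrow> 'a set set \<Rightarrow> nat" where
  "tree_length len F = (\<Sum>e\<in>F. len e)"

definition kmst_opt :: "'a set \<Rightarrow> 'a set set \<Rightarrow> 'a \<Rightarrow> ('a set \<Rightarrow> nat) \<Rightarrow> nat \<Rightarrow> nat" where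
  "kmst_opt V E r len k = Min {tree_length len F | W F. rooted_subtree V E r W F \<and> card W = k}"

definition expanding_pattern :: "'a set set \<Rightarrow> 'a \<Rightarrow> 'a set list \<Rightarrow> bool" where
  "expanding_pattern E r \<sigma> \<longleftrightarrow> set \<sigma> \<subseteq> E \<and> distinct \<sigma>
     \<and> (\<sigma> \<noteq> [] \<longrightarrow> r \<in> hd \<sigma>)
     \<and> (\<forall>i\<in>{1..length \<sigma>}. edges_form_tree (set (take i \<sigma>)))"

definition feasible_pattern :: "'a set \<Rightarrow> 'a set set \<Rightarrow> 'a \<Rightarrow> 'a set list \<Rightarrow> bool" where
  "feasible_pattern V E r \<sigma> \<longleftrightarrow> expanding_pattern E r \<sigma> \<and> V \<subseteq> insert r (\<Union>(set \<sigma>))"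

text \<open>Latency of v: sum of the lengths of e_1..e_{k_v}, k_v the first (1-based) index
  with v in e_{k_v}; k_r = 0.\<close>
definition vertex_latency :: "('a set \<Rightarrow> nat) \<Rightarrow> 'a \<Rightarrow> 'a set list \<Rightarrow> 'a \<Rightarrow> nat" where
  "vertex_latency len r \<sigma> v =
     (if v = r then 0
      else sum_list (map len (take (LEAST k. 1 \<le> k \<and> k \<le> length \<sigma> \<and> v \<in> \<sigma> ! (k - 1)) \<sigma>)))"

definition total_latency :: "'a set \<Rightarrow> ('a set \<Rightarrow> nat) \<Rightarrow> 'a \<Rightarrow> 'a set list \<Rightarrow> nat" where
  "total_latency V len r \<sigma> = (\<Sum>v\<in>V. vertex_latency len r \<sigma> v)"

definition opt_latency :: "'a set \<Rightarrow> 'a set set \<Rightarrow> ('a set \<Rightarrow> nat) \<Rightarrow> 'a \<Rightarrow> nat" where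
  "opt_latency V E len r = Min {total_latency V len r \<sigma> | \<sigma>. feasible_pattern V E r \<sigma>}"

text \<open>A (1,n)-path in H is a strictly increasing list of vertices starting at 1 and ending at n.\<close>
definition H_path :: "nat \<Rightarrow> nat list \<Rightarrow> bool" where
  "H_path n ps \<longleftrightarrow> ps \<noteq> [] \<and> hd ps = 1 \<and> last ps = n \<and> sorted_wrt (<) ps"

definition H_path_cost :: "(nat \<Rightarrow> nat \<Rightarrow> nat) \<Rightarrow> nat list \<Rightarrow> nat" where
  "H_path_cost c ps = sum_list (map (\<lambda>(i, j). c i j) (zip ps (tl ps)))"

definition shortest_H_path :: "nat \<Rightarrow> (nat \<Rightarrow> nat \<Rightarrow> nat) \<Rightarrow> nat" where
  "shortest_H_path n c = Min {H_path_cost c ps | ps. H_path n ps}"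

end

theory Submission
  imports Defs
begin

lemma sw_hd: "sorted_wrt (<) xs \<Longrightarrow> x \<in> set xs \<Longrightarrow> hd xs \<le> (x::nat)"
  by (cases xs) auto

lemma sw_last: "sorted_wrt (<) xs \<Longrightarrow> x \<in> set xs \<Longrightarrow> x \<le> last (xs::nat list)"
proof (induction xs)
  case (Cons a xs)
  then show ?case
    by (cases "xs = []") (auto simp: last_ConsR intro: less_imp_le dest: bspec[OF _ last_in_set])
qed simp

lemma cost_set:
  fixes xs :: "nat list"
  assumes "sorted_wrt (<) xs" "xs \<noteq> []"
  shows "sum_list (map (\<lambda>(i, j). f i j) (zip xs (tl xs)))
       = (\<Sum>j\<in>set xs - {hd xs}. f (Max {i\<in>set xs. i < j}) j)"
  using assms
proof (induction xs)
  case Nil then show ?case by simp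
next
  case (Cons a ys)
  show ?case
  proof (cases ys)
    case Nil then show ?thesis by simp
  next
    case (Cons b zs)
    have sw: "sorted_wrt (<) ys" using Cons.prems by simp
    have ab: "a < b" "\<forall>z\<in>set zs. a < z \<and> b < z" using Cons.prems Cons by auto
    have IH: "sum_list (map (\<lambda>(i, j). f i j) (zip ys (tl ys)))
       = (\<Sum>j\<in>set ys - {hd ys}. f (Max {i\<in>set ys. i < j}) j)"
      using Cons.IH sw Cons by simp
    have set1: "set (a # ys) - {hd (a # ys)} = insert b (set zs)"
      using ab Cons by auto
    have set2: "set ys - {hd ys} = set zs" using sw Cons by auto
    have bz: "b \<notin> set zs" using sw Cons by auto
    have m1: "Max {i\<in>set (a#ys). i < b} = a"
    proof -
      have "{i\<in>set (a#ys). i < b} = {a}" using ab Cons by auto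
      then show ?thesis by simp
    qed
    have m2: "Max {i\<in>set (a#ys). i < j} = Max {i\<in>set ys. i < j}" if "j \<in> set zs" for j
    proof -
      have "{i\<in>set (a#ys). i < j} = insert a {i\<in>set ys. i < j}" using ab that by auto
      moreover have "b \<in> {i\<in>set ys. i < j}" using ab that Cons by auto
      moreover have "finite {i\<in>set ys. i < j}" by simp
      ultimately have "Max {i\<in>set (a#ys). i < j} = max a (Max {i\<in>set ys. i < j})"
        by (metis Max_insert empty_iff)
      moreover have "b \<le> Max {i\<in>set ys. i < j}" using \<open>b \<in> _\<close> by simp
      ultimately show ?thesis using ab by simp
    qed
    have "sum_list (map (\<lambda>(i, j). f i j) (zip (a#ys) (tl (a#ys))))
        = f a b + sum_list (map (\<lambda>(i, j). f i j) (zip ys (tl ys)))"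
      using Cons by simp
    also have "\<dots> = f a b + (\<Sum>j\<in>set zs. f (Max {i\<in>set ys. i < j}) j)"
      using IH set2 by simp
    also have "\<dots> = f a b + (\<Sum>j\<in>set zs. f (Max {i\<in>set (a#ys). i < j}) j)"
      using m2 by simp
    also have "\<dots> = (\<Sum>j\<in>insert b (set zs). f (Max {i\<in>set (a#ys). i < j}) j)"
      using bz m1 by simp
    finally show ?thesis using set1 by simp
  qed
qed

locale coreL =
  fixes n N :: nat and t :: "nat \<Rightarrow> real"
  assumes n2: "2 \<le> n" and N1: "1 \<le> N"
    and tmono: "\<And>i j. 1 \<le> i \<Longrightarrow> i \<le> j \<Longrightarrow> j \<le> n \<Longrightarrow> t i \<le> t j"
    and tpos: "\<And>k. 2 \<le> k \<Longrightarrow> k \<le> n \<Longrightarrow> 0 < t k"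
begin

definition \<beta> where "\<beta> = exp (1 / real N)"
definition c where "c = t 2 / 2"
definition lam where "lam q m = c * \<beta> ^ (q + N*m)"
definition jj where "jj q m = Max (insert 1 {j\<in>{1..n}. t j \<le> lam q m})"
definition S where "S q = {1, n} \<union> range (jj q)"
definition mj where "mj q j = (LEAST m. t j \<le> lam q m)"
definition P where "P k = (LEAST p. t k \<le> c * \<beta> ^ p)"
definition pr where "pr q j = Max {i\<in>S q. i < j}"

lemma c_pos: "0 < c" using tpos[of 2] n2 by (simp add: c_def)
lemma c_lt: "2 \<le> k \<Longrightarrow> k \<le> n \<Longrightarrow> c < t k"
  using tmono[of 2 k] tpos[of 2] n2 by (simp add: c_def)
lemma beta_gt1: "1 < \<beta>" using N1 by (simp add: \<beta>_def)
lemma beta_N: "\<beta> ^ N = exp 1"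
  using N1 by (simp add: \<beta>_def flip: exp_of_nat_mult)
lemma beta_Nm: "\<beta> ^ (N*m) = exp (real m)"
  by (simp add: power_mult beta_N flip: exp_of_nat_mult)

lemma big: "\<exists>m. x \<le> c * \<beta> ^ (q + N*m)"
proof -
  define m where "m = nat (ceiling (x / c))"
  have "x / c \<le> real m" unfolding m_def by (rule real_nat_ceiling_ge)
  then have "x \<le> c * real m" using c_pos by (simp add: pos_divide_le_eq mult.commute)
  also have "real m \<le> exp (real m)" using exp_ge_add_one_self[of "real m"] by linarith
  also have "exp (real m) = \<beta> ^ (N*m)" by (simp add: beta_Nm)
  also have "\<dots> \<le> \<beta> ^ (q + N*m)" using beta_gt1 by (intro power_increasing) auto
  finally have "x \<le> c * \<beta> ^ (q + N*m)" using c_pos by simp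
  then show ?thesis by blast
qed

lemma lam_ex: "\<exists>m. x \<le> lam q m" using big unfolding lam_def by blast
lemma P_ex: "\<exists>p. x \<le> c * \<beta> ^ p" using big by blast

lemma lam_mono: "m \<le> m' \<Longrightarrow> lam q m \<le> lam q m'"
  unfolding lam_def using beta_gt1 c_pos by (auto intro!: power_increasing)

lemma mj_le: "t j \<le> lam q (mj q j)"
  unfolding mj_def using lam_ex by (rule LeastI_ex)

lemma jj_fin: "finite (insert 1 {j\<in>{1..n}. t j \<le> lam q m})" by simp
lemma jj_in: "jj q m \<in> insert 1 {j\<in>{1..n}. t j \<le> lam q m}"
  unfolding jj_def by (rule Max_in) auto
lemma jj_ge: "j \<in> {1..n} \<Longrightarrow> t j \<le> lam q m \<Longrightarrow> j \<le> jj q m"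
  unfolding jj_def by (rule Max_ge) auto
lemma jj_range: "1 \<le> jj q m \<and> jj q m \<le> n" using jj_in[of q m] n2 by auto

lemma S_sub: "S q \<subseteq> {1..n}" using jj_range n2 unfolding S_def by auto
lemma S_fin: "finite (S q)" using S_sub finite_subset by blast
lemma S_1: "1 \<in> S q" and S_n: "n \<in> S q" unfolding S_def by auto

lemma pr_props:
  assumes "j \<in> S q" "j \<noteq> 1"
  shows "pr q j \<in> S q" "pr q j < j" "1 \<le> pr q j" "\<And>x. x \<in> S q \<Longrightarrow> x < j \<Longrightarrow> x \<le> pr q j"
proof -
  have j1: "1 < j" using assms S_sub by force
  have ne: "{i\<in>S q. i < j} \<noteq> {}" using S_1 j1 by blast
  have fin: "finite {i\<in>S q. i < j}" using S_fin by simp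
  have "pr q j \<in> {i\<in>S q. i < j}" unfolding pr_def using Max_in[OF fin ne] .
  then show "pr q j \<in> S q" "pr q j < j" by auto
  then show "1 \<le> pr q j" using S_sub by force
  show "\<And>x. x \<in> S q \<Longrightarrow> x < j \<Longrightarrow> x \<le> pr q j" unfolding pr_def using fin by (auto intro: Max_ge)
qed

lemma key_b:
  assumes q: "q < N" and j: "j \<in> S q" "j \<noteq> 1" and k: "pr q j < k" "k \<le> n"
  shows "q + N * mj q j < P k + N"
proof (cases "mj q j")
  case 0 then show ?thesis using q by simp
next
  case (Suc m')
  have jn: "j \<in> {1..n}" using j subsetD[OF S_sub] by blast
  have tj: "\<not> t j \<le> lam q m'" using not_less_Least[of m' "\<lambda>m. t j \<le> lam q m"] Suc
    unfolding mj_def by auto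
  have "jj q m' < j"
  proof -
    have "x < j" if "x \<in> insert 1 {j\<in>{1..n}. t j \<le> lam q m'}" for x
    proof -
      { assume "x \<in> {j\<in>{1..n}. t j \<le> lam q m'}" "j \<le> x"
        then have "t j \<le> lam q m'" using tmono[of j x] jn by auto
        with tj have False by simp }
      then show ?thesis using that j(2) jn by force
    qed
    then show ?thesis using jj_in by blast
  qed
  moreover have "jj q m' \<in> S q" unfolding S_def by auto
  ultimately have "jj q m' \<le> pr q j" using pr_props(4)[OF j] by blast
  with k have "jj q m' < k" by simp
  moreover have k1: "k \<in> {1..n}" using k pr_props(3)[OF j] by auto
  ultimately have tk: "lam q m' < t k" using jj_ge[of k q m'] by force
  have k2: "2 \<le> k" using k pr_props(3)[OF j] by auto
  have "t k \<le> c * \<beta> ^ P k" unfolding P_def using P_ex by (rule LeastI_ex)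
  with tk have "c * \<beta> ^ (q + N*m') < c * \<beta> ^ P k" unfolding lam_def by simp
  then have "\<beta> ^ (q + N*m') < \<beta> ^ P k" using c_pos by simp
  then have "q + N*m' < P k" using beta_gt1 power_less_imp_less_exp by blast
  then show ?thesis using Suc by simp
qed

lemma key_c:
  assumes "j1 \<in> S q" "j2 \<in> S q" "1 < j1" "j1 < j2"
  shows "mj q j1 < mj q j2"
proof -
  have "j1 \<noteq> n" using assms S_sub by force
  then obtain m where m: "j1 = jj q m" using assms unfolding S_def by auto
  have j2n: "j2 \<in> {1..n}" using assms subsetD[OF S_sub] by blast
  have "t j1 \<le> lam q m" using jj_in[of q m] m assms by auto
  then have "mj q j1 \<le> m" unfolding mj_def by (rule Least_le)
  moreover have "m < mj q j2"
  proof (rule ccontr)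
    assume "\<not> m < mj q j2"
    then have "lam q (mj q j2) \<le> lam q m" by (intro lam_mono) simp
    then have "t j2 \<le> lam q m" using mj_le[of j2 q] by simp
    then have "j2 \<le> jj q m" using jj_ge j2n by blast
    then show False using m assms by simp
  qed
  ultimately show ?thesis by simp
qed

end

context coreL begin

lemma cost_q:
  fixes C :: "nat \<Rightarrow> nat \<Rightarrow> nat"
  assumes Cb: "\<And>i j. 1 \<le> i \<Longrightarrow> i < j \<Longrightarrow> j \<le> n \<Longrightarrow> real (C i j) \<le> real (n - i) * (2 * t j)"
    and q: "q < N"
  shows "(\<Sum>j\<in>S q - {1}. real (C (pr q j) j))
     \<le> (\<Sum>k\<in>{2..n}. 2 * (\<Sum>p\<in>{p. p < P k + N \<and> p mod N = q}. c * \<beta> ^ p))"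
proof -
  let ?S' = "S q - {1}"
  have fS: "finite ?S'" using S_fin by simp
  have jr: "j \<in> {1..n}" if "j \<in> ?S'" for j using that subsetD[OF S_sub] by blast
  have "(\<Sum>j\<in>?S'. real (C (pr q j) j)) \<le> (\<Sum>j\<in>?S'. real (n - pr q j) * (2 * t j))"
  proof (rule sum_mono)
    fix j assume j: "j \<in> ?S'"
    then show "real (C (pr q j) j) \<le> real (n - pr q j) * (2 * t j)"
      using Cb[of "pr q j" j] pr_props[of j q] jr[OF j] by auto
  qed
  also have "\<dots> = (\<Sum>j\<in>?S'. \<Sum>k\<in>{2..n}. if pr q j < k then 2 * t j else 0)"
  proof (rule sum.cong[OF refl])
    fix j assume j: "j \<in> ?S'"
    have p1: "1 \<le> pr q j" using pr_props[of j q] j by auto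
    have "(\<Sum>k\<in>{2..n}. if pr q j < k then 2 * t j else 0) = (\<Sum>k\<in>{pr q j<..n}. 2 * t j)"
    proof -
      have "{k\<in>{2..n}. pr q j < k} = {pr q j<..n}" using p1 by auto
      then show ?thesis by (simp add: sum.inter_filter[symmetric])
    qed
    also have "\<dots> = real (n - pr q j) * (2 * t j)" by simp
    finally show "real (n - pr q j) * (2 * t j) = (\<Sum>k\<in>{2..n}. if pr q j < k then 2 * t j else 0)" by simp
  qed
  also have "\<dots> = (\<Sum>k\<in>{2..n}. \<Sum>j\<in>?S'. if pr q j < k then 2 * t j else 0)"
    by (rule sum.swap)
  also have "\<dots> = (\<Sum>k\<in>{2..n}. 2 * (\<Sum>j\<in>{j\<in>?S'. pr q j < k}. t j))"
    using fS by (auto simp: sum.inter_filter[symmetric] sum_distrib_left intro!: sum.cong)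
  also have "\<dots> \<le> (\<Sum>k\<in>{2..n}. 2 * (\<Sum>p\<in>{p. p < P k + N \<and> p mod N = q}. c * \<beta> ^ p))"
  proof (rule sum_mono)
    fix k assume k: "k \<in> {2..n}"
    let ?A = "{j\<in>?S'. pr q j < k}"
    let ?g = "\<lambda>j. q + N * mj q j"
    have inj: "inj_on ?g ?A"
    proof (rule inj_onI)
      fix x y assume x: "x \<in> ?A" and y: "y \<in> ?A" and e: "?g x = ?g y"
      then have e': "mj q x = mj q y" using N1 by simp
      have x1: "1 < x" and y1: "1 < y" using x y jr by force+
      show "x = y"
      proof (rule ccontr)
        assume "x \<noteq> y"
        then have "x < y \<or> y < x" by auto
        then show False using key_c[of x q y] key_c[of y q x] x y x1 y1 e' by auto
      qed
    qed
    have "(\<Sum>j\<in>?A. t j) \<le> (\<Sum>j\<in>?A. c * \<beta> ^ ?g j)"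
      using mj_le by (intro sum_mono) (simp add: lam_def)
    also have "\<dots> = (\<Sum>p\<in>?g ` ?A. c * \<beta> ^ p)"
      using inj by (simp add: sum.reindex)
    also have "\<dots> \<le> (\<Sum>p\<in>{p. p < P k + N \<and> p mod N = q}. c * \<beta> ^ p)"
    proof (rule sum_mono2)
      show "finite {p. p < P k + N \<and> p mod N = q}" by simp
      show "?g ` ?A \<subseteq> {p. p < P k + N \<and> p mod N = q}"
        using key_b[OF q] k q by auto
      show "\<And>b. b \<in> {p. p < P k + N \<and> p mod N = q} - ?g ` ?A \<Longrightarrow> 0 \<le> c * \<beta> ^ b"
        using c_pos beta_gt1 by simp
    qed
    finally show "2 * (\<Sum>j\<in>?A. t j) \<le> 2 * (\<Sum>p\<in>{p. p < P k + N \<and> p mod N = q}. c * \<beta> ^ p)"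
      by simp
  qed
  finally show ?thesis .
qed

lemma sum_classes:
  fixes g :: "nat \<Rightarrow> real"
  shows "(\<Sum>q<N. \<Sum>p\<in>{p. p < M \<and> p mod N = q}. g p) = (\<Sum>p<M. g p)"
proof -
  have "(\<Sum>q<N. \<Sum>p\<in>{p. p < M \<and> p mod N = q}. g p)
      = (\<Sum>q<N. \<Sum>p<M. if p mod N = q then g p else 0)"
    by (auto simp: sum.inter_filter[symmetric] intro!: sum.cong)
  also have "\<dots> = (\<Sum>p<M. \<Sum>q<N. if p mod N = q then g p else 0)" by (rule sum.swap)
  also have "\<dots> = (\<Sum>p<M. g p)"
    using N1 by (intro sum.cong refl) (simp add: sum.delta)
  finally show ?thesis .
qed

lemma geo:
  assumes k: "k \<in> {2..n}"
  shows "(\<Sum>p<P k + N. c * \<beta> ^ p) \<le> exp 1 * \<beta> * real N * t k"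
proof -
  have k2: "2 \<le> k" "k \<le> n" using k by auto
  have b1: "1 < \<beta>" by (rule beta_gt1)
  have tP: "t k \<le> c * \<beta> ^ P k" unfolding P_def using P_ex by (rule LeastI_ex)
  have P0: "P k \<noteq> 0" using tP c_lt[OF k2] by (cases "P k") auto
  have "\<not> t k \<le> c * \<beta> ^ (P k - 1)"
    using not_less_Least[of "P k - 1" "\<lambda>p. t k \<le> c * \<beta> ^ p"] P0 unfolding P_def by auto
  then have "c * \<beta> ^ (P k - 1) < t k" by simp
  moreover have "\<beta> ^ P k = \<beta> * \<beta> ^ (P k - 1)" using P0 by (metis power_Suc Suc_pred' not_gr0)
  ultimately have cP: "c * \<beta> ^ P k \<le> \<beta> * t k" using b1 by (simp add: mult.left_commute)
  have sgp: "(\<Sum>p<P k + N. \<beta> ^ p) = (\<beta> ^ (P k + N) - 1) / (\<beta> - 1)"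
    using b1 by (simp add: sum_gp_strict divide_simps) (simp add: algebra_simps)
  have bN: "1 / (\<beta> - 1) \<le> real N"
  proof -
    have "1 + 1 / real N \<le> \<beta>" unfolding \<beta>_def by (rule exp_ge_add_one_self)
    then have "1 / real N \<le> \<beta> - 1" by simp
    then show ?thesis using N1 b1 by (simp add: divide_simps mult.commute)
  qed
  have "(\<Sum>p<P k + N. c * \<beta> ^ p) = c * ((\<beta> ^ (P k + N) - 1) / (\<beta> - 1))"
    by (simp add: sum_distrib_left[symmetric] sgp)
  also have "\<dots> \<le> c * (\<beta> ^ (P k + N) / (\<beta> - 1))"
    using c_pos b1 by (intro mult_left_mono divide_right_mono) auto
  also have "\<dots> = (c * \<beta> ^ P k) * exp 1 * (1 / (\<beta> - 1))"
    by (simp add: power_add beta_N)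
  also have "\<dots> \<le> (\<beta> * t k) * exp 1 * (1 / (\<beta> - 1))"
    using cP b1 by (intro mult_right_mono) auto
  also have "\<dots> \<le> (\<beta> * t k) * exp 1 * real N"
    using bN b1 tpos[OF k2] by (intro mult_left_mono) auto
  finally show ?thesis by (simp add: mult_ac)
qed

lemma path_of_S:
  fixes C :: "nat \<Rightarrow> nat \<Rightarrow> nat"
  shows "H_path n (sorted_list_of_set (S q)) \<and>
    real (H_path_cost C (sorted_list_of_set (S q))) = (\<Sum>j\<in>S q - {1}. real (C (pr q j) j))"
proof -
  let ?ps = "sorted_list_of_set (S q)"
  have set: "set ?ps = S q" using S_fin by simp
  have sw: "sorted_wrt (<) ?ps" by (rule strict_sorted_list_of_set)
  have ne: "?ps \<noteq> []" using set S_1[of q] by (metis empty_iff empty_set)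
  have h1: "hd ?ps = 1"
  proof -
    have "hd ?ps \<in> S q" using hd_in_set[OF ne] set by simp
    then have "1 \<le> hd ?ps" using S_sub by force
    moreover have "hd ?ps \<le> 1" using sw_hd[OF sw] S_1 set by simp
    ultimately show ?thesis by simp
  qed
  have hn: "last ?ps = n"
  proof -
    have "last ?ps \<in> S q" using last_in_set[OF ne] set by simp
    then have "last ?ps \<le> n" using S_sub by force
    moreover have "n \<le> last ?ps" using sw_last[OF sw] S_n set by simp
    ultimately show ?thesis by simp
  qed
  have "H_path n ?ps" unfolding H_path_def using ne h1 hn sw by simp
  moreover have "H_path_cost C ?ps = (\<Sum>j\<in>S q - {1}. C (pr q j) j)"
    unfolding H_path_cost_def cost_set[OF sw ne] set h1 pr_def by simp
  ultimately show ?thesis by simp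
qed

lemma core:
  fixes C :: "nat \<Rightarrow> nat \<Rightarrow> nat"
  assumes Cb: "\<And>i j. 1 \<le> i \<Longrightarrow> i < j \<Longrightarrow> j \<le> n \<Longrightarrow> real (C i j) \<le> real (n - i) * (2 * t j)"
  shows "\<exists>ps. H_path n ps \<and> real (H_path_cost C ps) \<le> 2 * exp (1 + 1 / real N) * (\<Sum>k\<in>{2..n}. t k)"
proof -
  define cost where "cost q = (\<Sum>j\<in>S q - {1}. real (C (pr q j) j))" for q
  define B where "B = 2 * exp (1 + 1 / real N) * (\<Sum>k\<in>{2..n}. t k)"
  have eb: "exp (1 + 1 / real N) = exp 1 * \<beta>" by (simp add: \<beta>_def exp_add)
  have "(\<Sum>q<N. cost q) \<le> (\<Sum>q<N. \<Sum>k\<in>{2..n}. 2 * (\<Sum>p\<in>{p. p < P k + N \<and> p mod N = q}. c * \<beta> ^ p))"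
    unfolding cost_def using cost_q[OF Cb] by (intro sum_mono) auto
  also have "\<dots> = (\<Sum>k\<in>{2..n}. 2 * (\<Sum>q<N. \<Sum>p\<in>{p. p < P k + N \<and> p mod N = q}. c * \<beta> ^ p))"
    by (subst sum.swap) (simp add: sum_distrib_left)
  also have "\<dots> = (\<Sum>k\<in>{2..n}. 2 * (\<Sum>p<P k + N. c * \<beta> ^ p))"
    by (simp add: sum_classes)
  also have "\<dots> \<le> (\<Sum>k\<in>{2..n}. 2 * (exp 1 * \<beta> * real N * t k))"
    using geo by (intro sum_mono) auto
  also have "\<dots> = real N * B"
    unfolding B_def eb by (simp add: sum_distrib_left mult_ac)
  finally have tot: "(\<Sum>q<N. cost q) \<le> real N * B" .
  have "\<exists>q<N. cost q \<le> B"
  proof (rule ccontr)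
    assume "\<not> (\<exists>q<N. cost q \<le> B)"
    then have "\<forall>q\<in>{..<N}. B < cost q" by auto
    then have "(\<Sum>q<N. B) < (\<Sum>q<N. cost q)"
      using N1 by (intro sum_strict_mono) (auto simp: lessThan_empty_iff)
    with tot show False by simp
  qed
  then obtain q where "q < N" "cost q \<le> B" by blast
  then show ?thesis using path_of_S[of q C] unfolding cost_def B_def by metis
qed

end



lemma adj_sym: "adj F u v = adj F v u" by (simp add: adj_def insert_commute)

lemma rt_sym: "(adj F)\<^sup>*\<^sup>* u v \<Longrightarrow> (adj F)\<^sup>*\<^sup>* v u"
proof -
  have "symp (adj F)" by (auto simp: symp_def adj_sym)
  then have "symp ((adj F)\<^sup>*\<^sup>*)" by (rule symp_rtranclp)
  then show "(adj F)\<^sup>*\<^sup>* u v \<Longrightarrow> (adj F)\<^sup>*\<^sup>* v u" by (auto dest: sympD)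
qed

lemma rt_mono: "(adj F)\<^sup>*\<^sup>* u v \<Longrightarrow> F \<subseteq> F' \<Longrightarrow> (adj F')\<^sup>*\<^sup>* u v"
proof (induction rule: rtranclp_induct)
  case (step y z)
  then have "adj F' y z" unfolding adj_def by auto
  with step show ?case by (meson rtranclp.rtrancl_into_rtrancl)
qed simp

lemma crossing: "(adj F)\<^sup>*\<^sup>* u v \<Longrightarrow> u \<in> A \<Longrightarrow> v \<notin> A \<Longrightarrow> \<exists>x y. {x, y} \<in> F \<and> x \<in> A \<and> y \<notin> A"
  by (induction rule: rtranclp_induct) (auto simp: adj_def)

lemma Lcard:
  assumes ep: "expanding_pattern E r \<sigma>" and i: "i \<le> length \<sigma>"
  shows "finite (insert r (\<Union>(set (take i \<sigma>))))"
    "card (insert r (\<Union>(set (take i \<sigma>)))) = i + 1"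
    "1 \<le> i \<Longrightarrow> insert r (\<Union>(set (take i \<sigma>))) = \<Union>(set (take i \<sigma>))"
    "1 \<le> i \<Longrightarrow> is_tree (\<Union>(set (take i \<sigma>))) (set (take i \<sigma>))"
proof -
  show "1 \<le> i \<Longrightarrow> is_tree (\<Union>(set (take i \<sigma>))) (set (take i \<sigma>))"
    using ep i unfolding expanding_pattern_def edges_form_tree_def by auto
  show ins: "1 \<le> i \<Longrightarrow> insert r (\<Union>(set (take i \<sigma>))) = \<Union>(set (take i \<sigma>))"
  proof -
    assume i1: "1 \<le> i"
    then have ne: "\<sigma> \<noteq> []" using i by auto
    then have "r \<in> hd \<sigma>" using ep unfolding expanding_pattern_def by auto
    moreover have "hd \<sigma> \<in> set (take i \<sigma>)" using ne i1
      by (metis One_nat_def hd_conv_nth hd_in_set le_zero_eq length_greater_0_conv nat_less_le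
          nth_take take_eq_Nil in_set_conv_nth less_le_trans zero_less_one)
    ultimately show ?thesis by blast
  qed
  have dc: "card (set (take i \<sigma>)) = i"
    using ep i unfolding expanding_pattern_def by (simp add: distinct_card)
  show "finite (insert r (\<Union>(set (take i \<sigma>))))"
  proof (cases "i = 0")
    case True then show ?thesis by simp
  next
    case False
    then have "is_tree (\<Union>(set (take i \<sigma>))) (set (take i \<sigma>))"
      using ep i unfolding expanding_pattern_def edges_form_tree_def by auto
    then show ?thesis unfolding is_tree_def by simp
  qed
  show "card (insert r (\<Union>(set (take i \<sigma>)))) = i + 1"
  proof (cases "i = 0")
    case True then show ?thesis by simp
  next
    case False
    then have "is_tree (\<Union>(set (take i \<sigma>))) (set (take i \<sigma>))"
      using ep i unfolding expanding_pattern_def edges_form_tree_def by auto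
    then show ?thesis using ins False dc unfolding is_tree_def by simp
  qed
qed

lemma grow:
  assumes graph: "simple_graph V E" and root: "r \<in> V" and conn: "connected_on V E"
  shows "m < card V \<Longrightarrow> \<exists>\<sigma>. expanding_pattern E r \<sigma> \<and> length \<sigma> = m"
proof (induction m)
  case 0
  show ?case by (rule exI[of _ "[]"]) (simp add: expanding_pattern_def)
next
  case (Suc m)
  then obtain \<sigma> where ep: "expanding_pattern E r \<sigma>" and len: "length \<sigma> = m" by auto
  define W' where "W' = insert r (\<Union>(set \<sigma>))"
  have sE: "set \<sigma> \<subseteq> E" using ep unfolding expanding_pattern_def by auto
  have EV: "\<forall>e\<in>E. e \<subseteq> V" and c2: "\<forall>e\<in>E. card e = 2" and fV: "finite V"
    using graph unfolding simple_graph_def by auto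
  have cW: "card W' = m + 1" using Lcard(2)[OF ep, of m] len unfolding W'_def by simp
  have WV: "W' \<subseteq> V" using sE EV root unfolding W'_def by auto
  obtain v where v: "v \<in> V" "v \<notin> W'"
  proof -
    have "\<not> V \<subseteq> W'"
    proof
      assume "V \<subseteq> W'"
      then have "card V \<le> card W'" using WV fV by (metis card_mono finite_subset)
      then show False using cW Suc.prems by simp
    qed
    then show ?thesis using that by auto
  qed
  have "(adj E)\<^sup>*\<^sup>* r v" using conn root v unfolding connected_on_def by auto
  then obtain x y where e: "{x, y} \<in> E" "x \<in> W'" "y \<notin> W'"
    using crossing[of E r v W'] v unfolding W'_def by auto
  define F where "F = set \<sigma>"
  define F' where "F' = insert {x, y} F"
  have eF: "{x, y} \<notin> F" using e unfolding F_def W'_def by auto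
  have rF': "r \<in> \<Union>F'"
  proof (cases "\<sigma> = []")
    case True then show ?thesis using e unfolding F'_def W'_def by auto
  next
    case False
    then have "r \<in> hd \<sigma>" "hd \<sigma> \<in> F" using ep unfolding expanding_pattern_def F_def by auto
    then show ?thesis unfolding F'_def by auto
  qed
  have UF': "\<Union>F' = insert y W'"
    using rF' e unfolding F'_def W'_def F_def by auto
  have fW': "finite W'" using WV fV finite_subset by blast
  have cardU: "card (\<Union>F') = m + 2" using UF' cW fW' e by simp
  have cardF: "card F' = m + 1" using eF len ep unfolding F'_def F_def expanding_pattern_def
    by (simp add: distinct_card)
  have reach: "(adj F')\<^sup>*\<^sup>* x w" if "w \<in> insert y W'" for w
  proof (cases "w = y")
    case True
    then show ?thesis unfolding adj_def F'_def by auto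
  next
    case False
    then have w: "w \<in> W'" using that by auto
    show ?thesis
    proof (cases "\<sigma> = []")
      case True
      then show ?thesis using w e unfolding W'_def by auto
    next
      case False
      then have m1: "1 \<le> m" using len by (cases m) auto
      have "is_tree (\<Union>F) F" using Lcard(4)[OF ep, of m] len m1 unfolding F_def by simp
      moreover have "\<Union>F = W'" using Lcard(3)[OF ep, of m] len m1 unfolding F_def W'_def by simp
      ultimately have "(adj F)\<^sup>*\<^sup>* x w" using e w unfolding is_tree_def connected_on_def by auto
      then show ?thesis by (rule rt_mono) (auto simp: F'_def)
    qed
  qed
  have tree: "is_tree (\<Union>F') F'"
    unfolding is_tree_def
  proof (intro conjI)
    show "finite (\<Union>F')" using UF' fW' by simp
    show "\<Union>F' \<noteq> {}" using UF' by simp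
    show "\<forall>e\<in>F'. e \<subseteq> \<Union>F' \<and> card e = 2" using sE e c2 unfolding F'_def F_def by auto
    show "connected_on (\<Union>F') F'" unfolding connected_on_def UF'
      using reach rt_sym by (meson rtranclp_trans)
    show "card (\<Union>F') = card F' + 1" using cardU cardF by simp
  qed
  have "expanding_pattern E r (\<sigma> @ [{x, y}])"
    unfolding expanding_pattern_def
  proof (intro conjI ballI impI)
    show "set (\<sigma> @ [{x, y}]) \<subseteq> E" using sE e by auto
    show "distinct (\<sigma> @ [{x, y}])" using ep eF unfolding expanding_pattern_def F_def by auto
    show "r \<in> hd (\<sigma> @ [{x, y}])"
    proof (cases "\<sigma> = []")
      case True then show ?thesis using e unfolding W'_def by auto
    next
      case False then show ?thesis using ep unfolding expanding_pattern_def by auto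
    qed
    fix i assume i: "i \<in> {1..length (\<sigma> @ [{x, y}])}"
    show "edges_form_tree (set (take i (\<sigma> @ [{x, y}])))"
    proof (cases "i \<le> m")
      case True
      then show ?thesis using ep i len unfolding expanding_pattern_def by auto
    next
      case False
      then have "i = m + 1" using i len by auto
      then have "set (take i (\<sigma> @ [{x, y}])) = F'" using len unfolding F'_def F_def by auto
      then show ?thesis unfolding edges_form_tree_def using tree by (simp add: F'_def F_def)
    qed
  qed
  then show ?case using len by (intro exI[of _ "\<sigma> @ [{x, y}]"]) simp
qed

lemma feasible_ex:
  assumes graph: "simple_graph V E" and root: "r \<in> V" and conn: "connected_on V E"
  shows "\<exists>\<sigma>. feasible_pattern V E r \<sigma>"
proof -
  have fV: "finite V" and EV: "\<forall>e\<in>E. e \<subseteq> V" using graph unfolding simple_graph_def by auto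
  have "0 < card V" using root fV card_gt_0_iff by blast
  then have n1: "card V - 1 < card V" by simp
  obtain \<sigma> where ep: "expanding_pattern E r \<sigma>" and len: "length \<sigma> = card V - 1"
    using grow[OF graph root conn n1] by auto
  have c: "card (insert r (\<Union>(set \<sigma>))) = card V" using Lcard(2)[OF ep, of "length \<sigma>"] len n1 by simp
  have sub: "insert r (\<Union>(set \<sigma>)) \<subseteq> V" using ep EV root unfolding expanding_pattern_def by auto
  have "insert r (\<Union>(set \<sigma>)) = V" using card_subset_eq[OF fV sub c] .
  then show ?thesis unfolding feasible_pattern_def using ep by auto
qed



definition Pf :: "('a set \<Rightarrow> nat) \<Rightarrow> 'a set list \<Rightarrow> nat \<Rightarrow> nat" where
  "Pf len \<sigma> m = sum_list (map len (take m \<sigma>))"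

lemma Pf_mono: "i \<le> j \<Longrightarrow> Pf len \<sigma> i \<le> Pf len \<sigma> j"
proof -
  assume "i \<le> j"
  then have "take j \<sigma> = take i \<sigma> @ take (j - i) (drop i \<sigma>)"
    by (metis le_add_diff_inverse take_add)
  then show ?thesis unfolding Pf_def by simp
qed

context
  fixes V :: "'a set" and E :: "'a set set" and r :: 'a and \<sigma> :: "'a set list"
  assumes graph: "simple_graph V E" and root: "r \<in> V" and fp: "feasible_pattern V E r \<sigma>"
begin

lemma ep: "expanding_pattern E r \<sigma>" using fp unfolding feasible_pattern_def by simp
lemma fV: "finite V" using graph unfolding simple_graph_def by simp
lemma EV: "\<forall>e\<in>E. e \<subseteq> V" using graph unfolding simple_graph_def by simp
lemma sE: "set \<sigma> \<subseteq> E" using ep unfolding expanding_pattern_def by simp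
lemma dist: "distinct \<sigma>" using ep unfolding expanding_pattern_def by simp

lemma Veq: "insert r (\<Union>(set \<sigma>)) = V"
  using fp sE EV root unfolding feasible_pattern_def by auto

lemma len_eq: "length \<sigma> = card V - 1"
  using Lcard(2)[OF ep, of "length \<sigma>"] Veq by simp

lemma kmst_le:
  assumes k: "1 \<le> k" "k \<le> card V"
  shows "kmst_opt V E r len k \<le> Pf len \<sigma> (k - 1)"
proof -
  define F where "F = set (take (k - 1) \<sigma>)"
  define W where "W = insert r (\<Union>F)"
  have kl: "k - 1 \<le> length \<sigma>" using len_eq k by simp
  have cW: "card W = k" using Lcard(2)[OF ep kl] k unfolding W_def F_def by simp
  have FE: "F \<subseteq> E" using sE unfolding F_def by (meson in_set_takeD subsetD subsetI)
  have tree: "is_tree W F"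
  proof (cases "k - 1 = 0")
    case True
    then have "F = {}" "W = {r}" unfolding F_def W_def by auto
    then show ?thesis unfolding is_tree_def connected_on_def by auto
  next
    case False
    then show ?thesis using Lcard(3,4)[OF ep kl] unfolding W_def F_def by simp
  qed
  have rs: "rooted_subtree V E r W F"
    unfolding rooted_subtree_def using tree FE EV root unfolding W_def by auto
  have tl: "tree_length len F = Pf len \<sigma> (k - 1)"
    unfolding tree_length_def Pf_def F_def using dist
    by (simp add: sum_list_distinct_conv_sum_set)
  have "E \<subseteq> Pow V" using EV by auto
  then have fE: "finite E" using fV finite_subset by blast
  have fin: "finite {tree_length len F | W F. rooted_subtree V E r W F \<and> card W = k}"
  proof (rule finite_subset)
    show "{tree_length len F | W F. rooted_subtree V E r W F \<and> card W = k} \<subseteq> tree_length len ` Pow E"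
      unfolding rooted_subtree_def by auto
    show "finite (tree_length len ` Pow E)" using fE by simp
  qed
  have "tree_length len F \<in> {tree_length len F | W F. rooted_subtree V E r W F \<and> card W = k}"
    using rs cW by blast
  then have "Min {tree_length len F | W F. rooted_subtree V E r W F \<and> card W = k} \<le> tree_length len F"
    by (rule Min_le[OF fin])
  then show ?thesis unfolding kmst_opt_def using tl by simp
qed

definition kv where "kv v = (LEAST k. 1 \<le> k \<and> k \<le> length \<sigma> \<and> v \<in> \<sigma> ! (k - 1))"

lemma kv_props:
  assumes v: "v \<in> V" "v \<noteq> r"
  shows "1 \<le> kv v" "kv v \<le> length \<sigma>" "v \<in> \<sigma> ! (kv v - 1)"
    "\<And>k'. 1 \<le> k' \<Longrightarrow> k' < kv v \<Longrightarrow> v \<notin> \<sigma> ! (k' - 1)"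
proof -
  have "v \<in> \<Union>(set \<sigma>)" using Veq v by auto
  then obtain i where i: "i < length \<sigma>" "v \<in> \<sigma> ! i" by (auto simp: in_set_conv_nth)
  then have ex: "\<exists>k. 1 \<le> k \<and> k \<le> length \<sigma> \<and> v \<in> \<sigma> ! (k - 1)"
    by (intro exI[of _ "Suc i"]) auto
  have "1 \<le> kv v \<and> kv v \<le> length \<sigma> \<and> v \<in> \<sigma> ! (kv v - 1)"
    unfolding kv_def by (rule LeastI_ex[OF ex])
  then show "1 \<le> kv v" "kv v \<le> length \<sigma>" "v \<in> \<sigma> ! (kv v - 1)" by auto
  fix k' assume "1 \<le> k'" "k' < kv v"
  then show "v \<notin> \<sigma> ! (k' - 1)" using not_less_Least[of k' "\<lambda>k. 1 \<le> k \<and> k \<le> length \<sigma> \<and> v \<in> \<sigma> ! (k - 1)"]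
    \<open>kv v \<le> length \<sigma>\<close> unfolding kv_def by auto
qed

lemma kv_notin:
  assumes v: "v \<in> V" "v \<noteq> r"
  shows "v \<notin> insert r (\<Union>(set (take (kv v - 1) \<sigma>)))"
proof
  assume "v \<in> insert r (\<Union>(set (take (kv v - 1) \<sigma>)))"
  then have "v \<in> \<Union>(set (take (kv v - 1) \<sigma>))" using v by simp
  then obtain i where i: "i < length (take (kv v - 1) \<sigma>)" "v \<in> take (kv v - 1) \<sigma> ! i"
    by (auto simp: in_set_conv_nth)
  then have "v \<in> \<sigma> ! (Suc i - 1)" "1 \<le> Suc i" "Suc i < kv v" by auto
  then show False using kv_props(4)[OF v] by blast
qed

lemma kv_inj: "inj_on kv (V - {r})"
proof (rule inj_onI)
  fix u v assume u: "u \<in> V - {r}" and v: "v \<in> V - {r}" and e: "kv u = kv v"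
  show "u = v"
  proof (rule ccontr)
    assume uv: "u \<noteq> v"
    define m where "m = kv u"
    have m1: "1 \<le> m" "m \<le> length \<sigma>" using kv_props(1,2)[of u] u unfolding m_def by auto
    define A where "A = insert r (\<Union>(set (take (m - 1) \<sigma>)))"
    define B where "B = insert r (\<Union>(set (take m \<sigma>)))"
    have cA: "card A = m" "finite A" using Lcard(1,2)[OF ep, of "m - 1"] m1 unfolding A_def by auto
    have cB: "card B = m + 1" "finite B" using Lcard(1,2)[OF ep, of m] m1 unfolding B_def by auto
    have tk: "take m \<sigma> = take (m - 1) \<sigma> @ [\<sigma> ! (m - 1)]"
    proof -
      have "m - 1 < length \<sigma>" using m1 by simp
      then have "take (Suc (m - 1)) \<sigma> = take (m - 1) \<sigma> @ [\<sigma> ! (m - 1)]" by (rule take_Suc_conv_app_nth)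
      then show ?thesis using m1 by simp
    qed
    have BA: "B = A \<union> \<sigma> ! (m - 1)" unfolding A_def B_def tk by auto
    have uin: "u \<in> \<sigma> ! (m - 1)" using kv_props(3)[of u] u unfolding m_def by auto
    have vin: "v \<in> \<sigma> ! (m - 1)" using kv_props(3)[of v] v e unfolding m_def by auto
    have uA: "u \<notin> A" using kv_notin[of u] u unfolding A_def m_def by auto
    have vA: "v \<notin> A" using kv_notin[of v] v e unfolding A_def m_def by auto
    have sub: "insert u (insert v A) \<subseteq> B" using BA uin vin by auto
    have "card (insert u (insert v A)) = m + 2" using cA uA vA uv by simp
    moreover have "card (insert u (insert v A)) \<le> card B" using card_mono[OF cB(2) sub] .
    ultimately show False using cB by simp
  qed
qed

lemma lat_ge: "(\<Sum>k\<in>{2..card V}. Pf len \<sigma> (k - 1)) \<le> total_latency V len r \<sigma>"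
proof -
  have img: "kv ` (V - {r}) = {1..length \<sigma>}"
  proof (rule card_subset_eq)
    show "finite {1..length \<sigma>}" by simp
    show "kv ` (V - {r}) \<subseteq> {1..length \<sigma>}" using kv_props(1,2) by fastforce
    have "card (kv ` (V - {r})) = card (V - {r})" using card_image[OF kv_inj] .
    also have "\<dots> = card V - 1" using root fV by simp
    finally show "card (kv ` (V - {r})) = card {1..length \<sigma>}" using len_eq by simp
  qed
  have "(\<Sum>k\<in>{2..card V}. Pf len \<sigma> (k - 1)) = (\<Sum>m\<in>{1..length \<sigma>}. Pf len \<sigma> m)"
  proof -
    have "0 < card V" using root fV card_gt_0_iff by blast
    then have "card V = Suc (length \<sigma>)" using len_eq by simp
    then have "{2..card V} = Suc ` {1..length \<sigma>}" by (simp add: image_Suc_atLeastAtMost)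
    then show ?thesis by (simp only:) (subst sum.reindex, auto)
  qed
  also have "\<dots> = (\<Sum>m\<in>kv ` (V - {r}). Pf len \<sigma> m)" using img by simp
  also have "\<dots> = (\<Sum>v\<in>V - {r}. Pf len \<sigma> (kv v))" using kv_inj by (simp add: sum.reindex)
  also have "\<dots> = (\<Sum>v\<in>V - {r}. vertex_latency len r \<sigma> v)"
    by (intro sum.cong refl) (simp add: vertex_latency_def Pf_def kv_def)
  also have "\<dots> \<le> (\<Sum>v\<in>V. vertex_latency len r \<sigma> v)" using fV by (intro sum_mono2) auto
  finally show ?thesis unfolding total_latency_def .
qed

end



theorem lemma3:
  fixes V :: "'a set" and E :: "'a set set" and r :: 'a
    and len :: "'a set \<Rightarrow> nat" and T :: "nat \<Rightarrow> 'a set \<times> 'a set set"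
  assumes graph: "simple_graph V E"
    and root: "r \<in> V"
    and conn: "connected_on V E"
    and pos: "\<forall>e\<in>E. len e > 0"
    and T_subtree: "\<forall>k\<in>{1..card V}. rooted_subtree V E r (fst (T k)) (snd (T k)) \<and> card (fst (T k)) = k"
    and T_approx: "\<forall>k\<in>{1..card V}. tree_length len (snd (T k)) \<le> 2 * kmst_opt V E r len k"
    and T_1: "T 1 = ({r}, {})"
  shows "real (shortest_H_path (card V) (\<lambda>i j. (card V - i) * tree_length len (snd (T j))))
           \<le> 2 * exp 1 * real (opt_latency V E len r)"
proof -
  define n where "n = card V"
  define c' where "c' = (\<lambda>i j. (card V - i) * tree_length len (snd (T j)))"
  have fV: "finite V" using graph unfolding simple_graph_def by simp
  have EV: "E \<subseteq> Pow V" using graph unfolding simple_graph_def by auto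
  have fE: "finite E" using EV fV finite_subset by blast
  have n1: "1 \<le> n" unfolding n_def using root fV card_gt_0_iff by (metis One_nat_def Suc_leI empty_iff)
  define Ls where "Ls = {total_latency V len r \<sigma> | \<sigma>. feasible_pattern V E r \<sigma>}"
  have finLs: "finite Ls"
  proof (rule finite_subset)
    show "Ls \<subseteq> total_latency V len r ` {xs. set xs \<subseteq> E \<and> length xs \<le> card E}"
    proof
      fix x assume "x \<in> Ls"
      then obtain \<sigma> where s: "feasible_pattern V E r \<sigma>" "x = total_latency V len r \<sigma>"
        unfolding Ls_def by auto
      then have "set \<sigma> \<subseteq> E" "distinct \<sigma>"
        unfolding feasible_pattern_def expanding_pattern_def by auto
      then have "length \<sigma> \<le> card E" using fE by (metis card_mono distinct_card)
      then show "x \<in> total_latency V len r ` {xs. set xs \<subseteq> E \<and> length xs \<le> card E}"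
        using s \<open>set \<sigma> \<subseteq> E\<close> by auto
    qed
    show "finite (total_latency V len r ` {xs. set xs \<subseteq> E \<and> length xs \<le> card E})"
      using fE by (simp add: finite_lists_length_le)
  qed
  have neLs: "Ls \<noteq> {}" using feasible_ex[OF graph root conn] unfolding Ls_def by auto
  have "opt_latency V E len r \<in> Ls" unfolding opt_latency_def Ls_def[symmetric]
    using Min_in[OF finLs neLs] .
  then obtain \<sigma> where fp: "feasible_pattern V E r \<sigma>" and opt: "total_latency V len r \<sigma> = opt_latency V E len r"
    unfolding Ls_def by auto
  define Hs where "Hs = {H_path_cost c' ps | ps. H_path n ps}"
  have finHs: "finite Hs"
  proof (rule finite_subset)
    show "Hs \<subseteq> H_path_cost c' ` {xs. set xs \<subseteq> {1..n} \<and> length xs \<le> n}"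
    proof
      fix x assume "x \<in> Hs"
      then obtain ps where p: "H_path n ps" "x = H_path_cost c' ps" unfolding Hs_def by auto
      then have sw: "sorted_wrt (<) ps" and ne: "ps \<noteq> []" and h: "hd ps = 1" and l: "last ps = n"
        unfolding H_path_def by auto
      have st: "set ps \<subseteq> {1..n}" using sw_hd[OF sw] sw_last[OF sw] h l by fastforce
      have "distinct ps" using sw by (simp add: strict_sorted_iff)
      then have "length ps \<le> n" using st card_mono[OF _ st] by (metis card_atLeastAtMost diff_Suc_1 distinct_card finite_atLeastAtMost)
      then show "x \<in> H_path_cost c' ` {xs. set xs \<subseteq> {1..n} \<and> length xs \<le> n}" using p st by auto
    qed
    show "finite (H_path_cost c' ` {xs. set xs \<subseteq> {1..n} \<and> length xs \<le> n})"
      by (simp add: finite_lists_length_le)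
  qed
  have sh_le: "shortest_H_path n c' \<le> H_path_cost c' ps" if "H_path n ps" for ps
    unfolding shortest_H_path_def Hs_def[symmetric] using that by (intro Min_le[OF finHs]) (auto simp: Hs_def)
  have bound: "real (shortest_H_path n c') \<le> 2 * exp (1 + 1 / real N) * real (opt_latency V E len r)"
    if N: "1 \<le> N" for N
  proof (cases "n = 1")
    case True
    have "H_path n [1]" using True by (simp add: H_path_def)
    moreover have "H_path_cost c' [1] = 0" by (simp add: H_path_cost_def)
    ultimately have "shortest_H_path n c' = 0" using sh_le by fastforce
    then show ?thesis by simp
  next
    case False
    then have n2: "2 \<le> n" using n1 by simp
    define t where "t k = real (Pf len \<sigma> (k - 1))" for k
    have len: "length \<sigma> = n - 1" using len_eq[OF graph root fp] unfolding n_def .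
    have ne: "\<sigma> \<noteq> []" using len n2 by auto
    have hE: "hd \<sigma> \<in> E" using ne fp unfolding feasible_pattern_def expanding_pattern_def by auto
    have P1: "0 < Pf len \<sigma> 1" using ne pos hE by (cases \<sigma>) (auto simp: Pf_def)
    interpret coreL n N t
    proof
      show "2 \<le> n" by (rule n2)
      show "1 \<le> N" by (rule N)
      show "\<And>i j. 1 \<le> i \<Longrightarrow> i \<le> j \<Longrightarrow> j \<le> n \<Longrightarrow> t i \<le> t j"
        unfolding t_def by (simp add: Pf_mono)
      show "\<And>k. 2 \<le> k \<Longrightarrow> k \<le> n \<Longrightarrow> 0 < t k"
      proof -
        fix k assume "2 \<le> k" "k \<le> n"
        then have "Pf len \<sigma> 1 \<le> Pf len \<sigma> (k - 1)" by (intro Pf_mono) simp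
        then show "0 < t k" using P1 unfolding t_def by simp
      qed
    qed
    have Cb: "real (c' i j) \<le> real (n - i) * (2 * t j)" if "1 \<le> i" "i < j" "j \<le> n" for i j
    proof -
      have j: "j \<in> {1..card V}" using that unfolding n_def by auto
      have "tree_length len (snd (T j)) \<le> 2 * kmst_opt V E r len j" using T_approx j by auto
      also have "\<dots> \<le> 2 * Pf len \<sigma> (j - 1)" using kmst_le[OF graph root fp, of j len] j by simp
      finally have "c' i j \<le> (n - i) * (2 * Pf len \<sigma> (j - 1))" unfolding c'_def n_def by simp
      then have "real (c' i j) \<le> real ((n - i) * (2 * Pf len \<sigma> (j - 1)))" by linarith
      then show ?thesis unfolding t_def by simp
    qed
    obtain ps where ps: "H_path n ps" and cps: "real (H_path_cost c' ps) \<le> 2 * exp (1 + 1 / real N) * (\<Sum>k\<in>{2..n}. t k)"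
      using core[of c'] Cb by blast
    have "(\<Sum>k\<in>{2..n}. t k) = real (\<Sum>k\<in>{2..n}. Pf len \<sigma> (k - 1))" unfolding t_def by simp
    also have "\<dots> \<le> real (opt_latency V E len r)"
    proof -
      have "(\<Sum>k\<in>{2..n}. Pf len \<sigma> (k - 1)) \<le> opt_latency V E len r"
        using lat_ge[OF graph root fp, of len] opt unfolding n_def by simp
      then show ?thesis by (simp only: of_nat_le_iff)
    qed
    finally have "(\<Sum>k\<in>{2..n}. t k) \<le> real (opt_latency V E len r)" .
    then have "real (H_path_cost c' ps) \<le> 2 * exp (1 + 1 / real N) * real (opt_latency V E len r)"
      using cps by (smt (verit) exp_gt_zero mult_left_mono)
    moreover have "real (shortest_H_path n c') \<le> real (H_path_cost c' ps)" using sh_le[OF ps] by simp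
    ultimately show ?thesis by linarith
  qed
  have lim: "(\<lambda>N. 2 * exp (1 + 1 / real N) * real (opt_latency V E len r))
      \<longlonglongrightarrow> 2 * exp (1 + 0) * real (opt_latency V E len r)"
    by (intro tendsto_mult tendsto_const tendsto_exp tendsto_add lim_inverse_n')
  have "real (shortest_H_path n c') \<le> 2 * exp (1 + 0) * real (opt_latency V E len r)"
    using lim bound by (intro LIMSEQ_le_const[OF lim]) auto
  then show ?thesis unfolding n_def c'_def by simp
qed


end
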